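(* Let $A\in\mathbb{R}^{m\times n}$, $b\in\mathbb{R}^m$, $\delta\ge0$ with $\{x:\|Ax-b\|\le\delta\}\neq\emptyset$. Then the exact penalty decomposition method described in the context, with parameters $\epsilon>0$, $\sigma>1$, $\rho_0>0$, terminates after at most $\left\lceil\frac{\ln(n)-\ln(\epsilon\rho_0)}{\ln\sigma}\right\rceil$ iterations.
   Context: Exact penalty decomposition method: (S.0) Given a tolerance $\epsilon>0$ and a ratio $\sigma>1$, choose $\rho_0>0$, set $v^0=e$ (the all-ones vector in $\mathbb{R}^n$) and $k:=0$. (S.1) Choose $x^{k+1}\in\arg\min_{x\in\mathbb{R}^n}\{\langle v^k,|x|\rangle:\ \|Ax-b\|\le\delta\}$. (S.2) For each $i$, set $v^{k+1}_i=0$ if $|x^{k+1}_i|>1/\rho_k$ and $v^{k+1}_i=1$ otherwise. (S.3) If $\langle v^{k+1},|x^{k+1}|\rangle\le\epsilon$, stop; otherwise go to (S.4). (S.4) Set $\rho_{k+1}=\sigma\rho_k$, $k:=k+1$, and go to (S.1). Here $\|\cdot\|$ is the Euclidean norm and $|x|$ the componentwise absolute value. *)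

theory Defs
  imports "HOL-Analysis.Analysis"
begin

definition vabs :: "real^'n \<Rightarrow> real^'n" where
  "vabs x = (\<chi> i. \<bar>x $ i\<bar>)"

end

theory Submission
  imports Defs
begin

theorem theorem3p2:
  fixes A :: "real^'n^'m" and b :: "real^'m" and \<delta> \<epsilon> \<sigma> \<rho>0 :: real
    and x v :: "nat \<Rightarrow> real^'n" and \<rho> :: "nat \<Rightarrow> real"
  assumes delta: "\<delta> \<ge> 0"
    and feasible: "\<exists>z. norm (A *v z - b) \<le> \<delta>"
    and eps: "\<epsilon> > 0" and sigma: "\<sigma> > 1" and rho0: "\<rho>0 > 0"
    and S0_rho: "\<rho> 0 = \<rho>0"
    and S0_v: "v 0 = (\<chi> i. 1)"
    and S1_feas: "\<And>k. norm (A *v x (Suc k) - b) \<le> \<delta>"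
    and S1_min: "\<And>k z. norm (A *v z - b) \<le> \<delta> \<Longrightarrow> v k \<bullet> vabs (x (Suc k)) \<le> v k \<bullet> vabs z"
    and S2: "\<And>k i. v (Suc k) $ i = (if \<bar>x (Suc k) $ i\<bar> > 1 / \<rho> k then 0 else 1)"
    and S4: "\<And>k. \<rho> (Suc k) = \<sigma> * \<rho> k"
  shows "\<exists>k::nat. int k \<le> max 0 \<lceil>(ln (real CARD('n)) - ln (\<epsilon> * \<rho>0)) / ln \<sigma>\<rceil>
                 \<and> v (Suc k) \<bullet> vabs (x (Suc k)) \<le> \<epsilon>"
proof -
  have rho: "\<rho> k = \<sigma> ^ k * \<rho>0" for k
    by (induction k) (auto simp: S0_rho S4)
  have rpos: "\<rho> k > 0" for k using rho sigma rho0 by simp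
  have bound: "v (Suc k) \<bullet> vabs (x (Suc k)) \<le> real CARD('n) / \<rho> k" for k
  proof -
    have "v (Suc k) \<bullet> vabs (x (Suc k)) = (\<Sum>i\<in>UNIV. v (Suc k) $ i * \<bar>x (Suc k) $ i\<bar>)"
      by (simp add: inner_vec_def vabs_def)
    also have "\<dots> \<le> (\<Sum>i\<in>(UNIV::'n set). 1 / \<rho> k)"
      using rpos[of k] by (intro sum_mono) (simp add: S2 less_imp_le)
    also have "\<dots> = real CARD('n) / \<rho> k" by simp
    finally show ?thesis .
  qed
  define L where "L = (ln (real CARD('n)) - ln (\<epsilon> * \<rho>0)) / ln \<sigma>"
  define K where "K = nat (max 0 \<lceil>L\<rceil>)"
  have lns: "ln \<sigma> > 0" using sigma by simp
  have KL: "real K \<ge> L" unfolding K_def by linarith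
  hence "real K * ln \<sigma> \<ge> ln (real CARD('n)) - ln (\<epsilon> * \<rho>0)"
    using lns unfolding L_def by (simp add: divide_le_eq)
  hence "ln (real CARD('n)) \<le> ln (\<sigma> ^ K * (\<epsilon> * \<rho>0))"
    using sigma eps rho0 by (simp add: ln_mult ln_realpow)
  hence "real CARD('n) \<le> \<sigma> ^ K * (\<epsilon> * \<rho>0)"
    using sigma eps rho0 by (subst (asm) ln_le_cancel_iff) auto
  hence "real CARD('n) / \<rho> K \<le> \<epsilon>"
    using rpos[of K] by (simp add: rho divide_le_eq algebra_simps)
  hence "v (Suc K) \<bullet> vabs (x (Suc K)) \<le> \<epsilon>" using bound[of K] by linarith
  moreover have "int K \<le> max 0 \<lceil>(ln (real CARD('n)) - ln (\<epsilon> * \<rho>0)) / ln \<sigma>\<rceil>"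
    unfolding K_def L_def by simp
  ultimately show ?thesis by blast
qed

end
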